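(* For all integers $m\ge1$ and $q\ge1$, the Jacobian determinant of the polynomial map $\mathbb R^m\to\mathbb R^m$, $\xi\mapsto\nabla_\xi A_{q+1}(\xi)-(q+1)^2A_q(\xi)\underline1$, is a nonzero polynomial in $\xi$; consequently this map is a local diffeomorphism outside the real algebraic hypersurface where this determinant vanishes.
   Context: $A_r(\xi_1,\dots,\xi_m)=\sum_{k\in\mathbb N^m,\ \sum_ik_i=r}\binom{r}{k_1,\dots,k_m}^2\prod_i\xi_i^{k_i}$ (multinomial coefficients); $\underline1=(1,\dots,1)\in\mathbb R^m$. *)

theory Defs
  imports "HOL-Analysis.Analysis"
begin

definition multinom :: "nat \<Rightarrow> ('m::finite \<Rightarrow> nat) \<Rightarrow> real" where
  "multinom r k = fact r / (\<Prod>i\<in>UNIV. fact (k i))"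

definition A_poly :: "nat \<Rightarrow> real^'m::finite \<Rightarrow> real" where
  "A_poly r \<xi> = (\<Sum>k\<in>{k::'m\<Rightarrow>nat. (\<Sum>i\<in>UNIV. k i) = r}.
      (multinom r k)\<^sup>2 * (\<Prod>i\<in>UNIV. (\<xi> $ i) ^ k i))"

definition pdiff :: "(real^'m::finite \<Rightarrow> real) \<Rightarrow> 'm \<Rightarrow> real^'m \<Rightarrow> real" where
  "pdiff f j x = deriv (\<lambda>t. f (x + t *\<^sub>R axis j 1)) 0"

definition grad :: "(real^'m::finite \<Rightarrow> real) \<Rightarrow> real^'m \<Rightarrow> real^'m" where
  "grad f x = (\<chi> j. pdiff f j x)"

definition jacobian :: "(real^'m::finite \<Rightarrow> real^'n::finite) \<Rightarrow> real^'m \<Rightarrow> real^'m^'n" where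
  "jacobian F x = (\<chi> i j. pdiff (\<lambda>y. F y $ i) j x)"

definition Fmap :: "nat \<Rightarrow> real^'m::finite \<Rightarrow> real^'m" where
  "Fmap q \<xi> = grad (A_poly (Suc q)) \<xi> - ((real (Suc q))\<^sup>2 * A_poly q \<xi>) *\<^sub>R (\<chi> i. 1)"

fun Ck_on :: "nat \<Rightarrow> (real^'n::finite) set \<Rightarrow> (real^'n \<Rightarrow> real) \<Rightarrow> bool" where
  "Ck_on 0 S f = continuous_on S f"
| "Ck_on (Suc k) S f = (continuous_on S f \<and>
     (\<forall>j. \<exists>g. (\<forall>x\<in>S. ((\<lambda>t. f (x + t *\<^sub>R axis j 1)) has_real_derivative g x) (at 0))
              \<and> Ck_on k S g))"

definition smooth_map_on :: "(real^'n::finite) set \<Rightarrow> (real^'n \<Rightarrow> real^'m::finite) \<Rightarrow> bool" where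
  "smooth_map_on S F = (\<forall>k i. Ck_on k S (\<lambda>x. F x $ i))"

definition local_diffeo_at :: "(real^'n::finite \<Rightarrow> real^'n) \<Rightarrow> real^'n \<Rightarrow> bool" where
  "local_diffeo_at F x = (\<exists>U V g. open U \<and> x \<in> U \<and> open V \<and> F ` U = V \<and>
      (\<forall>y\<in>U. g (F y) = y) \<and> (\<forall>z\<in>V. F (g z) = z) \<and>
      smooth_map_on U F \<and> smooth_map_on V g)"

end

theory Submission
  imports Defs
begin

fun Dk :: "nat \<Rightarrow> (real^'n::finite) set \<Rightarrow> (real^'n \<Rightarrow> real) \<Rightarrow> bool" where
  "Dk 0 S f = continuous_on S f"
| "Dk (Suc k) S f = (continuous_on S f \<and> (\<exists>D. (\<forall>x\<in>S. (f has_derivative D x) (at x)) \<and>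
      (\<forall>j. Dk k S (\<lambda>x. D x (axis j 1)))))"

lemma Dk_cont: "Dk k S f \<Longrightarrow> continuous_on S f"
  by (cases k) auto

lemma Dk_Suc_imp: "Dk (Suc k) S f \<Longrightarrow> Dk k S f"
proof (induction k arbitrary: f)
  case 0 then show ?case by auto
next
  case (Suc k)
  then obtain D where "continuous_on S f" "\<forall>x\<in>S. (f has_derivative D x) (at x)"
     "\<forall>j. Dk (Suc k) S (\<lambda>x. D x (axis j 1))" by auto
  then show ?case using Suc.IH by auto
qed

lemma Dk_mono: "Dk k S f \<Longrightarrow> l \<le> k \<Longrightarrow> Dk l S f"
proof (induction k)
  case 0 then show ?case by simp
next
  case (Suc k) then show ?case using Dk_Suc_imp[of k S f] by (auto simp: le_Suc_eq simp del: Dk.simps)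
qed

lemma Dk_const: "Dk k S (\<lambda>x. c)"
proof (induction k arbitrary: c)
  case 0 then show ?case by auto
next
  case (Suc k)
  show ?case
    by (auto intro!: exI[of _ "\<lambda>x v. 0"] Suc)
qed

lemma Dk_coord: "Dk k S (\<lambda>x. x $ i)"
proof (cases k)
  case 0 then show ?thesis by (auto intro!: continuous_intros)
next
  case (Suc k)
  show ?thesis unfolding Suc
    by (auto intro!: exI[of _ "\<lambda>x v. v $ i"] Dk_const continuous_intros
       bounded_linear_imp_has_derivative[OF bounded_linear_vec_nth])
qed

lemma Dk_add: "Dk k S f \<Longrightarrow> Dk k S g \<Longrightarrow> Dk k S (\<lambda>x. f x + g x)"
proof (induction k arbitrary: f g)
  case 0 then show ?case by (auto intro!: continuous_intros)
next
  case (Suc k)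
  from Suc.prems obtain D1 D2 where
    "continuous_on S f" "\<forall>x\<in>S. (f has_derivative D1 x) (at x)" "\<forall>j. Dk k S (\<lambda>x. D1 x (axis j 1))"
    "continuous_on S g" "\<forall>x\<in>S. (g has_derivative D2 x) (at x)" "\<forall>j. Dk k S (\<lambda>x. D2 x (axis j 1))"
    by auto
  then show ?case
    by (auto intro!: exI[of _ "\<lambda>x v. D1 x v + D2 x v"] Suc.IH continuous_intros derivative_intros)
qed

lemma Dk_mult: "Dk k S f \<Longrightarrow> Dk k S g \<Longrightarrow> Dk k S (\<lambda>x. f x * g x)"
proof (induction k arbitrary: f g)
  case 0 then show ?case by (auto intro!: continuous_intros)
next
  case (Suc k)
  from Suc.prems obtain D1 D2 where
    "continuous_on S f" "\<forall>x\<in>S. (f has_derivative D1 x) (at x)" "\<forall>j. Dk k S (\<lambda>x. D1 x (axis j 1))"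
    "continuous_on S g" "\<forall>x\<in>S. (g has_derivative D2 x) (at x)" "\<forall>j. Dk k S (\<lambda>x. D2 x (axis j 1))"
    by auto
  moreover have "Dk k S f" "Dk k S g" using Suc.prems Dk_Suc_imp by blast+
  ultimately show ?case
    by (auto intro!: exI[of _ "\<lambda>x v. f x * D2 x v + D1 x v * g x"] Suc.IH Dk_add continuous_intros derivative_intros)
qed

lemma Dk_uminus: "Dk k S f \<Longrightarrow> Dk k S (\<lambda>x. - f x)"
proof -
  assume "Dk k S f"
  then have "Dk k S (\<lambda>x. (-1) * f x)" by (intro Dk_mult Dk_const)
  then show ?thesis by simp
qed

lemma Dk_sum: "finite A \<Longrightarrow> (\<And>a. a \<in> A \<Longrightarrow> Dk k S (f a)) \<Longrightarrow> Dk k S (\<lambda>x. \<Sum>a\<in>A. f a x)"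
proof (induction A rule: finite_induct)
  case empty then show ?case by (simp add: Dk_const)
next
  case (insert a A) then show ?case by (simp add: Dk_add)
qed

lemma Dk_prod: "finite A \<Longrightarrow> (\<And>a. a \<in> A \<Longrightarrow> Dk k S (f a)) \<Longrightarrow> Dk k S (\<lambda>x. \<Prod>a\<in>A. f a x)"
proof (induction A rule: finite_induct)
  case empty then show ?case by (simp add: Dk_const)
next
  case (insert a A) then show ?case by (simp add: Dk_mult)
qed

lemma Dk_power: "Dk k S f \<Longrightarrow> Dk k S (\<lambda>x. f x ^ n)"
proof (induction n)
  case 0 then show ?case by (simp add: Dk_const)
next
  case (Suc n) then show ?case by (simp add: Dk_mult)
qed

lemma Dk_inverse: "Dk k S f \<Longrightarrow> (\<And>x. x \<in> S \<Longrightarrow> f x \<noteq> 0) \<Longrightarrow> Dk k S (\<lambda>x. inverse (f x))"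
proof (induction k arbitrary: f)
  case 0 then show ?case by (auto intro!: continuous_on_inverse)
next
  case (Suc k)
  from Suc.prems obtain D1 where c: "continuous_on S f" and d: "\<forall>x\<in>S. (f has_derivative D1 x) (at x)"
     and p: "\<forall>j. Dk k S (\<lambda>x. D1 x (axis j 1))"
    by auto
  have i: "Dk k S (\<lambda>x. inverse (f x))" using Suc Dk_Suc_imp by blast
  have "continuous_on S (\<lambda>x. inverse (f x))" using c Suc.prems(2) by (intro continuous_on_inverse) auto
  moreover have "\<forall>x\<in>S. ((\<lambda>x. inverse (f x)) has_derivative (\<lambda>h. - (inverse (f x) * D1 x h * inverse (f x)))) (at x)"
    using d Suc.prems(2) by (auto intro: has_derivative_inverse)
  moreover have "\<forall>j. Dk k S (\<lambda>x. - (inverse (f x) * D1 x (axis j 1) * inverse (f x)))"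
    using i p by (intro allI Dk_uminus Dk_mult) auto
  ultimately show ?case unfolding Dk.simps
    by (intro conjI exI[of _ "\<lambda>x h. - (inverse (f x) * D1 x h * inverse (f x))"]) auto
qed

lemma Dk_cong: "open S \<Longrightarrow> Dk k S f \<Longrightarrow> (\<And>x. x \<in> S \<Longrightarrow> f x = g x) \<Longrightarrow> Dk k S g"
proof (induction k arbitrary: f g)
  case 0 then show ?case using continuous_on_cong by force
next
  case (Suc k)
  from Suc.prems obtain D1 where c: "continuous_on S f" and d: "\<forall>x\<in>S. (f has_derivative D1 x) (at x)"
     and p: "\<forall>j. Dk k S (\<lambda>x. D1 x (axis j 1))"
    by auto
  have "continuous_on S g" using c Suc.prems continuous_on_cong by force
  moreover have "\<forall>x\<in>S. (g has_derivative D1 x) (at x)"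
    using d Suc.prems by (auto intro: has_derivative_transform_within_open[of f _ _ UNIV S])
  ultimately show ?case using p by (simp only: Dk.simps) blast
qed

lemma basis_exp_R: "(\<Sum>i\<in>UNIV. (x $ i) *\<^sub>R axis i (1::real)) = (x::real^'n::finite)"
  using basis_expansion[of x] by (simp add: scalar_mult_eq_scaleR)

lemma line_deriv:
  assumes "(f has_derivative D) (at x)"
  shows "((\<lambda>t. f (x + t *\<^sub>R v)) has_real_derivative D v) (at 0)"
proof -
  have l: "((\<lambda>t::real. x + t *\<^sub>R v) has_derivative (\<lambda>t. t *\<^sub>R v)) (at 0)"
    by (auto intro!: derivative_eq_intros)
  have "(f has_derivative D) (at ((\<lambda>t::real. x + t *\<^sub>R v) 0))" using assms by simp
  from has_derivative_compose[OF l this]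
  have "((\<lambda>t. f (x + t *\<^sub>R v)) has_derivative (\<lambda>t. D (t *\<^sub>R v))) (at 0)" by (simp add: o_def)
  moreover have "(\<lambda>t. D (t *\<^sub>R v)) = (*) (D v)"
    using assms has_derivative_bounded_linear[OF assms] by (auto simp: linear_scale bounded_linear.linear)
  ultimately show ?thesis by (simp add: has_field_derivative_def)
qed

lemma pdiff_eq:
  assumes "(f has_derivative D) (at x)"
  shows "pdiff f j x = D (axis j 1)"
  unfolding pdiff_def using line_deriv[OF assms] by (rule DERIV_imp_deriv)

lemma Dk_Ck: "Dk k S f \<Longrightarrow> Ck_on k S f"
proof (induction k arbitrary: f)
  case 0 then show ?case by simp
next
  case (Suc k)
  from Suc.prems obtain D1 where c: "continuous_on S f" and d: "\<forall>x\<in>S. (f has_derivative D1 x) (at x)"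
     and p: "\<forall>j. Dk k S (\<lambda>x. D1 x (axis j 1))"
    by auto
  show ?case
  proof (simp only: Ck_on.simps, intro conjI allI c)
    fix j
    show "\<exists>g. (\<forall>x\<in>S. ((\<lambda>t. f (x + t *\<^sub>R axis j 1)) has_real_derivative g x) (at 0)) \<and> Ck_on k S g"
      using d p Suc.IH line_deriv by (intro exI[of _ "\<lambda>x. D1 x (axis j 1)"]) blast
  qed
qed

definition smooth :: "(real^'n::finite) set \<Rightarrow> (real^'n \<Rightarrow> real) \<Rightarrow> bool" where
  "smooth S f = (\<forall>k. Dk k S f)"

lemma smooth_deriv:
  assumes "open S" "smooth S f"
  shows "\<exists>D. (\<forall>x\<in>S. (f has_derivative D x) (at x)) \<and> (\<forall>j. smooth S (\<lambda>x. D x (axis j 1)))"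
proof -
  from assms(2) have "Dk (Suc 0) S f" by (simp add: smooth_def)
  then obtain D where d: "\<forall>x\<in>S. (f has_derivative D x) (at x)" by auto
  have "Dk k S (\<lambda>x. D x (axis j 1))" for j k
  proof -
    from assms(2) have "Dk (Suc k) S f" by (simp add: smooth_def)
    then obtain D' where d': "\<forall>x\<in>S. (f has_derivative D' x) (at x)"
      and p: "\<forall>j. Dk k S (\<lambda>x. D' x (axis j 1))" by auto
    have "\<forall>x\<in>S. D' x = D x" using d d' has_derivative_unique by blast
    then show ?thesis using p Dk_cong[OF assms(1)] by metis
  qed
  then show ?thesis using d unfolding smooth_def by blast
qed

lemma has_derivative_vec_comp:
  fixes h :: "'a::real_normed_vector \<Rightarrow> real^'n::finite"
  assumes "\<And>i. ((\<lambda>x. h x $ i) has_derivative D i) (at x)"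
  shows "(h has_derivative (\<lambda>v. \<chi> i. D i v)) (at x)"
  apply (rule iffD2[OF has_derivative_componentwise_within])
  apply (auto simp: Basis_vec_def inner_axis assms)
  done

lemma Dk_comp:
  assumes "open S" "smooth T \<phi>" "open T" "\<And>x. x \<in> S \<Longrightarrow> h x \<in> T" "\<And>i. Dk k S (\<lambda>x. h x $ i)"
  shows "Dk k S (\<lambda>x. \<phi> (h x))"
  using assms(2,5)
proof (induction k arbitrary: \<phi>)
  case 0
  have "continuous_on S h"
  proof -
    have "continuous_on S (\<lambda>x. \<chi> i. h x $ i)" using 0 by (intro continuous_on_vec_lambda) simp
    then show ?thesis by simp
  qed
  moreover have "continuous_on T \<phi>" using 0 by (simp add: smooth_def Dk_cont)
  ultimately show ?case using assms(4) unfolding Dk.simps by (intro continuous_on_compose2[of T \<phi> S h]) auto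
next
  case (Suc k)
  obtain D\<phi> where d\<phi>: "\<forall>y\<in>T. (\<phi> has_derivative D\<phi> y) (at y)"
    and p\<phi>: "\<forall>i. smooth T (\<lambda>y. D\<phi> y (axis i 1))"
    using smooth_deriv[OF assms(3) Suc.prems(1)] by blast
  have "\<exists>Dh. (\<forall>x\<in>S. ((\<lambda>x. h x $ i) has_derivative Dh x) (at x)) \<and> (\<forall>j. Dk k S (\<lambda>x. Dh x (axis j 1)))" for i
    using Suc.prems(2)[of i] by auto
  then obtain Dh where dh: "\<And>i. \<forall>x\<in>S. ((\<lambda>x. h x $ i) has_derivative Dh i x) (at x)"
    and ph: "\<And>i j. Dk k S (\<lambda>x. Dh i x (axis j 1))" by metis
  have hk: "\<And>i. Dk k S (\<lambda>x. h x $ i)" using Suc.prems(2) Dk_Suc_imp by blast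
  have cont: "continuous_on S (\<lambda>x. \<phi> (h x))"
    using Dk_cont Suc.IH[OF Suc.prems(1) hk] by blast
  define E where "E x v = D\<phi> (h x) (\<chi> i. Dh i x v)" for x v
  have der: "((\<lambda>x. \<phi> (h x)) has_derivative E x) (at x)" if "x \<in> S" for x
  proof -
    have "(h has_derivative (\<lambda>v. \<chi> i. Dh i x v)) (at x)"
      using dh that by (intro has_derivative_vec_comp) auto
    moreover have "(\<phi> has_derivative D\<phi> (h x)) (at (h x))" using d\<phi> assms(4) that by auto
    ultimately show ?thesis using has_derivative_compose unfolding E_def o_def by fast
  qed
  have eqE: "E x (axis j 1) = (\<Sum>i\<in>UNIV. D\<phi> (h x) (axis i 1) * Dh i x (axis j 1))" if "x \<in> S" for x j
  proof -
    have bl: "bounded_linear (D\<phi> (h x))" using d\<phi> assms(4) that has_derivative_bounded_linear by blast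
    have "E x (axis j 1) = D\<phi> (h x) (\<Sum>i\<in>UNIV. (Dh i x (axis j 1)) *\<^sub>R axis i 1)"
      unfolding E_def using basis_exp_R[of "\<chi> i. Dh i x (axis j 1)"] by simp
    also have "\<dots> = (\<Sum>i\<in>UNIV. Dh i x (axis j 1) * D\<phi> (h x) (axis i 1))"
      using bl by (simp add: linear_sum linear_scale bounded_linear.linear)
    finally show ?thesis by (simp add: mult.commute)
  qed
  have "Dk k S (\<lambda>x. \<Sum>i\<in>UNIV. D\<phi> (h x) (axis i 1) * Dh i x (axis j 1))" for j
    using Suc.IH[OF p\<phi>[rule_format] hk] ph by (intro Dk_sum Dk_mult) auto
  then have "Dk k S (\<lambda>x. E x (axis j 1))" for j
    using eqE Dk_cong[OF assms(1)] by (metis (no_types, lifting))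
  then show ?case using cont der unfolding Dk.simps by blast
qed

definition mon :: "('n::finite \<Rightarrow> nat) \<Rightarrow> real^'n \<Rightarrow> real" where
  "mon k x = (\<Prod>i\<in>UNIV. (x $ i) ^ k i)"

definition bx :: "nat \<Rightarrow> ('n::finite \<Rightarrow> nat) set" where
  "bx N = {k. \<forall>i. k i \<le> N}"

definition is_poly :: "(real^'n::finite \<Rightarrow> real) \<Rightarrow> bool" where
  "is_poly f = (\<exists>c N. \<forall>x. f x = (\<Sum>k\<in>bx N. c k * mon k x))"

lemma finite_bx: "finite (bx N :: ('n::finite \<Rightarrow> nat) set)"
proof -
  have "bx N \<subseteq> PiE (UNIV::'n set) (\<lambda>_. {..N})"
    by (auto simp: bx_def PiE_def extensional_def)
  then show ?thesis by (rule finite_subset) (intro finite_PiE, auto)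
qed

lemma mon_add: "mon (\<lambda>i. a i + b i) x = mon a x * mon b x"
  by (simp add: mon_def power_add prod.distrib)

lemma mon_zero: "mon (\<lambda>i. 0) x = 1"
  by (simp add: mon_def)

lemma bx_mono: "N \<le> M \<Longrightarrow> bx N \<subseteq> bx M"
  unfolding bx_def using le_trans by blast

lemma poly_ext:
  assumes "N \<le> M"
  shows "(\<Sum>k\<in>bx N. c k * mon k x) = (\<Sum>k\<in>bx M. (if k \<in> bx N then c k else 0) * mon k x)"
proof -
  have "(\<Sum>k\<in>bx M. (if k \<in> bx N then c k else 0) * mon k x) = (\<Sum>k\<in>bx N. (if k \<in> bx N then c k else 0) * mon k x)"
    using bx_mono[OF assms] finite_bx by (intro sum.mono_neutral_right) auto
  then show ?thesis by simp
qed

lemma is_poly_ext: "is_poly f \<Longrightarrow> \<exists>c N. N \<ge> M \<and> (\<forall>x. f x = (\<Sum>k\<in>bx N. c k * mon k x))"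
proof -
  assume "is_poly f"
  then obtain c N where f: "\<forall>x. f x = (\<Sum>k\<in>bx N. c k * mon k x)" unfolding is_poly_def by blast
  show ?thesis
    using f poly_ext[of N "max N M" c] by (intro exI[of _ "\<lambda>k. if k \<in> bx N then c k else 0"] exI[of _ "max N M"]) auto
qed

lemma is_poly_const: "is_poly (\<lambda>x::real^'n::finite. a)"
proof -
  have b: "bx 0 = {\<lambda>i::'n. 0::nat}" by (auto simp: bx_def)
  show ?thesis unfolding is_poly_def
    by (intro exI[of _ "\<lambda>k. a"] exI[of _ 0]) (simp add: b mon_zero)
qed

lemma is_poly_coord: "is_poly (\<lambda>x. x $ i)"
proof -
  let ?k = "\<lambda>l. if l = i then 1 else 0::nat"
  have k: "?k \<in> bx 1" by (auto simp: bx_def)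
  have m: "mon ?k x = x $ i" for x
    by (simp add: mon_def if_distrib prod.If_cases)
  show ?thesis unfolding is_poly_def
  proof (intro exI[of _ "\<lambda>k. if k = ?k then 1 else 0"] exI[of _ 1] allI)
    fix x :: "real^'a"
    have "(\<Sum>k\<in>bx 1. (if k = ?k then 1 else 0) * mon k x) = (\<Sum>k\<in>bx 1. (if k = ?k then mon ?k x else 0))"
      by (intro sum.cong) auto
    also have "\<dots> = mon ?k x" using k by (subst sum.delta[OF finite_bx]) simp
    finally show "x $ i = (\<Sum>k\<in>bx 1. (if k = ?k then 1 else 0) * mon k x)" using m by simp
  qed
qed

lemma is_poly_add: "is_poly f \<Longrightarrow> is_poly g \<Longrightarrow> is_poly (\<lambda>x. f x + g x)"
proof -
  assume "is_poly f" "is_poly g"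
  then obtain c1 N1 where f: "\<forall>x. f x = (\<Sum>k\<in>bx N1. c1 k * mon k x)" unfolding is_poly_def by blast
  from \<open>is_poly g\<close> obtain c2 N2 where g: "N2 \<ge> N1" "\<forall>x. g x = (\<Sum>k\<in>bx N2. c2 k * mon k x)"
    using is_poly_ext by blast
  show ?thesis unfolding is_poly_def
    using f g poly_ext[OF g(1), of c1]
    by (intro exI[of _ "\<lambda>k. (if k \<in> bx N1 then c1 k else 0) + c2 k"] exI[of _ N2])
       (simp add: sum.distrib distrib_right)
qed

lemma is_poly_mult: "is_poly f \<Longrightarrow> is_poly g \<Longrightarrow> is_poly (\<lambda>x. f x * g x)"
proof -
  assume "is_poly f" "is_poly g"
  then obtain c1 N1 where f: "\<forall>x. f x = (\<Sum>k\<in>bx N1. c1 k * mon k x)" unfolding is_poly_def by blast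
  from \<open>is_poly g\<close> obtain c2 N where g: "N \<ge> N1" "\<forall>x. g x = (\<Sum>k\<in>bx N. c2 k * mon k x)"
    using is_poly_ext by blast
  define c1' where "c1' k = (if k \<in> bx N1 then c1 k else 0)" for k
  have f': "\<forall>x. f x = (\<Sum>k\<in>bx N. c1' k * mon k x)" using f poly_ext[OF g(1), of c1] unfolding c1'_def by simp
  define B where "B = (bx N :: ('a \<Rightarrow> nat) set)"
  define c where "c k = (\<Sum>p\<in>{p. p \<in> B \<times> B \<and> (\<lambda>i. fst p i + snd p i) = k}. c1' (fst p) * c2 (snd p))" for k
  have "f x * g x = (\<Sum>k\<in>bx (2*N). c k * mon k x)" for x
  proof -
    have "f x * g x = (\<Sum>a\<in>B. \<Sum>b\<in>B. c1' a * c2 b * mon (\<lambda>i. a i + b i) x)"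
      unfolding f'[rule_format] g(2)[rule_format] B_def sum_product mon_add
      by (intro sum.cong refl) (simp add: algebra_simps)
    also have "\<dots> = (\<Sum>p\<in>B \<times> B. c1' (fst p) * c2 (snd p) * mon (\<lambda>i. fst p i + snd p i) x)"
      by (simp add: sum.cartesian_product case_prod_beta)
    also have "\<dots> = (\<Sum>k\<in>bx (2*N). \<Sum>p\<in>{p. p \<in> B \<times> B \<and> (\<lambda>i. fst p i + snd p i) = k}.
                        c1' (fst p) * c2 (snd p) * mon (\<lambda>i. fst p i + snd p i) x)"
      by (rule sum.group[symmetric]) (auto simp: B_def finite_bx, auto simp: bx_def mult_2 intro: add_mono)
    also have "\<dots> = (\<Sum>k\<in>bx (2*N). c k * mon k x)"
      unfolding c_def sum_distrib_right by (intro sum.cong refl) auto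
    finally show ?thesis .
  qed
  then show ?thesis unfolding is_poly_def by blast
qed

lemma is_poly_sum: "finite A \<Longrightarrow> (\<And>a. a \<in> A \<Longrightarrow> is_poly (f a)) \<Longrightarrow> is_poly (\<lambda>x. \<Sum>a\<in>A. f a x)"
proof (induction A rule: finite_induct)
  case empty then show ?case by (simp add: is_poly_const)
next
  case (insert a A) then show ?case by (simp add: is_poly_add)
qed

lemma is_poly_prod: "finite A \<Longrightarrow> (\<And>a. a \<in> A \<Longrightarrow> is_poly (f a)) \<Longrightarrow> is_poly (\<lambda>x. \<Prod>a\<in>A. f a x)"
proof (induction A rule: finite_induct)
  case empty then show ?case by (simp add: is_poly_const)
next
  case (insert a A) then show ?case by (simp add: is_poly_mult)
qed

lemma is_poly_power: "is_poly f \<Longrightarrow> is_poly (\<lambda>x. f x ^ n)"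
proof (induction n)
  case 0 then show ?case by (simp add: is_poly_const)
next
  case (Suc n) then show ?case by (simp add: is_poly_mult)
qed

lemma is_poly_mono: "is_poly (mon k)"
  unfolding mon_def by (intro is_poly_prod is_poly_power is_poly_coord) auto

lemma is_poly_diff: "is_poly f \<Longrightarrow> is_poly g \<Longrightarrow> is_poly (\<lambda>x. f x - g x)"
proof -
  assume "is_poly f" "is_poly g"
  then have "is_poly (\<lambda>x. f x + (-1) * g x)" by (intro is_poly_add is_poly_mult is_poly_const)
  then show ?thesis by simp
qed

lemma Dk_mon: "Dk k S (mon e)"
  unfolding mon_def by (intro Dk_prod Dk_power Dk_coord) auto

lemma is_poly_Dk: "is_poly f \<Longrightarrow> Dk k S f"
proof -
  assume "is_poly f"
  then obtain c N where f: "\<forall>x. f x = (\<Sum>k\<in>bx N. c k * mon k x)" unfolding is_poly_def by blast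
  have "Dk k S (\<lambda>x. \<Sum>k\<in>bx N. c k * mon k x)"
    by (intro Dk_sum Dk_mult Dk_const Dk_mon finite_bx)
  moreover have "f = (\<lambda>x. \<Sum>k\<in>bx N. c k * mon k x)" using f by auto
  ultimately show ?thesis by simp
qed

definition dec :: "'n \<Rightarrow> ('n \<Rightarrow> nat) \<Rightarrow> ('n \<Rightarrow> nat)" where
  "dec j k = (\<lambda>i. if i = j then k i - 1 else k i)"

lemma mon_line:
  "((\<lambda>t. mon k (x + t *\<^sub>R axis j 1)) has_real_derivative (real (k j) * mon (dec j k) x)) (at 0)"
proof -
  define P where "P = (\<Prod>i\<in>UNIV-{j}. (x $ i) ^ k i)"
  have e1: "mon k (x + t *\<^sub>R axis j 1) = (x $ j + t) ^ k j * P" for t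
  proof -
    have "mon k (x + t *\<^sub>R axis j 1) = (x $ j + t) ^ k j * (\<Prod>i\<in>UNIV-{j}. ((x + t *\<^sub>R axis j 1) $ i) ^ k i)"
      unfolding mon_def by (subst prod.remove[of UNIV j]) auto
    also have "(\<Prod>i\<in>UNIV-{j}. ((x + t *\<^sub>R axis j 1) $ i) ^ k i) = P"
      unfolding P_def by (intro prod.cong) (auto simp: axis_def)
    finally show ?thesis .
  qed
  have e2: "mon (dec j k) x = (x $ j) ^ (k j - 1) * P"
    unfolding mon_def P_def dec_def by (subst prod.remove[of UNIV j]) (auto intro!: prod.cong)
  have "((\<lambda>t. (x $ j + t) ^ k j * P) has_real_derivative (real (k j) * (x $ j + 0) ^ (k j - 1) * 1 * P)) (at 0)"
    by (auto intro!: derivative_eq_intros)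
  then show ?thesis unfolding e1 e2 by (simp add: mult.assoc)
qed

lemma monosum_line:
  assumes "finite K"
  shows "((\<lambda>t. \<Sum>k\<in>K. w k * mon (e k) (x + t *\<^sub>R axis j 1)) has_real_derivative
       (\<Sum>k\<in>K. (w k * real (e k j)) * mon (dec j (e k)) x)) (at 0)"
  using assms
  by (auto intro!: DERIV_sum DERIV_cmult mon_line simp: mult.assoc)

lemma pdiff_monosum:
  assumes "finite K"
  shows "pdiff (\<lambda>x. \<Sum>k\<in>K. w k * mon (e k) x) j x = (\<Sum>k\<in>K. (w k * real (e k j)) * mon (dec j (e k)) x)"
  unfolding pdiff_def using monosum_line[OF assms] by (rule DERIV_imp_deriv)

lemma is_poly_monosum: "finite K \<Longrightarrow> is_poly (\<lambda>x. \<Sum>k\<in>K. w k * mon (e k) x)"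
  by (intro is_poly_sum is_poly_mult is_poly_const is_poly_mono)

definition KK :: "nat \<Rightarrow> ('n::finite \<Rightarrow> nat) set" where
  "KK r = {k. (\<Sum>i\<in>UNIV. k i) = r}"

lemma finite_KK: "finite (KK r)"
proof -
  have "KK r \<subseteq> bx r"
    unfolding KK_def bx_def by (auto intro: member_le_sum[of _ UNIV, simplified])
  then show ?thesis using finite_bx finite_subset by blast
qed

definition ww :: "nat \<Rightarrow> ('n::finite \<Rightarrow> nat) \<Rightarrow> real" where
  "ww r k = (multinom r k)\<^sup>2"

lemma A_eq: "A_poly r = (\<lambda>x. \<Sum>k\<in>KK r. ww r k * mon k x)"
  by (simp add: A_poly_def KK_def ww_def mon_def fun_eq_iff)

lemma pdiff_A: "pdiff (A_poly r) i x = (\<Sum>k\<in>KK r. (ww r k * real (k i)) * mon (dec i k) x)"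
  unfolding A_eq using pdiff_monosum[OF finite_KK[of r], where w="ww r" and e="\<lambda>k. k" and j=i and x=x] by simp

definition cq :: "nat \<Rightarrow> real" where "cq q = (real (Suc q))\<^sup>2"

lemma Fmap_comp: "Fmap q x $ i = (\<Sum>k\<in>KK (Suc q). (ww (Suc q) k * real (k i)) * mon (dec i k) x)
     - cq q * (\<Sum>k\<in>KK q. ww q k * mon k x)"
  unfolding Fmap_def grad_def pdiff_A cq_def by (simp add: A_eq)

lemma Fmap_line: "((\<lambda>t. Fmap q (x + t *\<^sub>R axis j 1) $ i) has_real_derivative
   ((\<Sum>k\<in>KK (Suc q). (ww (Suc q) k * real (k i) * real (dec i k j)) * mon (dec j (dec i k)) x)
     - cq q * (\<Sum>k\<in>KK q. (ww q k * real (k j)) * mon (dec j k) x))) (at 0)"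
  unfolding Fmap_comp
  by (intro DERIV_diff DERIV_cmult monosum_line[OF finite_KK, where w="\<lambda>k. ww (Suc q) k * real (k i)" and e="dec i", simplified]
       monosum_line[OF finite_KK, where w="ww q" and e="\<lambda>k. k", simplified])

lemma jac_formula: "jacobian (Fmap q) x $ i $ j =
   (\<Sum>k\<in>KK (Suc q). (ww (Suc q) k * real (k i) * real (dec i k j)) * mon (dec j (dec i k)) x)
     - cq q * (\<Sum>k\<in>KK q. (ww q k * real (k j)) * mon (dec j k) x)"
  unfolding jacobian_def pdiff_def using DERIV_imp_deriv[OF Fmap_line] by simp

lemma is_poly_Fmap: "is_poly (\<lambda>x. Fmap q x $ i)"
  unfolding Fmap_comp
  by (intro is_poly_diff is_poly_mult is_poly_const is_poly_monosum finite_KK)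

lemma is_poly_jac: "is_poly (\<lambda>x. jacobian (Fmap q) x $ i $ j)"
  unfolding jac_formula
  by (intro is_poly_diff is_poly_mult is_poly_const is_poly_monosum finite_KK)

lemma is_poly_det: "is_poly (\<lambda>x. det (jacobian (Fmap q) x))"
  unfolding det_def
  by (intro is_poly_sum is_poly_mult is_poly_const is_poly_prod is_poly_jac finite_permutations) auto

lemma mon_axis: "mon v (axis a (1::real)) = (if \<forall>t. t \<noteq> a \<longrightarrow> v t = 0 then 1 else 0)"
proof (cases "\<forall>t. t \<noteq> a \<longrightarrow> v t = 0")
  case True
  then show ?thesis unfolding mon_def by (auto simp: axis_def intro!: prod.neutral)
next
  case False
  then obtain t where "t \<noteq> a" "v t \<noteq> 0" by auto
  then have "(axis a (1::real) $ t) ^ v t = 0" by (simp add: axis_def)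
  then have "(\<Prod>t\<in>UNIV. (axis a (1::real) $ t) ^ v t) = 0" by (intro prod_zero) auto
  then show ?thesis unfolding mon_def using False by auto
qed

lemma collapse: "finite K \<Longrightarrow> k0 \<in> K \<Longrightarrow> (\<And>k. k \<in> K \<Longrightarrow> f k \<noteq> 0 \<Longrightarrow> k = k0) \<Longrightarrow> sum f K = f k0"
proof -
  assume a: "finite K" "k0 \<in> K" "\<And>k. k \<in> K \<Longrightarrow> f k \<noteq> 0 \<Longrightarrow> k = k0"
  have "sum f (K - {k0}) = 0" using a(3) by (intro sum.neutral) auto
  then show ?thesis using a(1,2) by (subst sum.remove[of K k0]) auto
qed

lemma eq_from_sum:
  fixes k k0 :: "'n::finite \<Rightarrow> nat"
  assumes "\<And>t. t \<noteq> a \<Longrightarrow> k t = k0 t" "sum k UNIV = sum k0 UNIV"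
  shows "k = k0"
proof -
  have "sum k UNIV = k a + sum k (UNIV - {a})" by (subst sum.remove[of UNIV a]) auto
  moreover have "sum k0 UNIV = k0 a + sum k0 (UNIV - {a})" by (subst sum.remove[of UNIV a]) auto
  moreover have "sum k (UNIV - {a}) = sum k0 (UNIV - {a})" using assms(1) by (intro sum.cong) auto
  ultimately have "k a = k0 a" using assms(2) by simp
  then show ?thesis using assms(1) by (metis ext)
qed

lemma prod_supp:
  fixes h :: "'n::finite \<Rightarrow> 'b::comm_monoid_mult"
  shows "(\<And>t. t \<notin> A \<Longrightarrow> h t = 1) \<Longrightarrow> prod h UNIV = prod h A"
  by (rule prod.mono_neutral_right) auto

definition k1 :: "'n \<Rightarrow> nat \<Rightarrow> 'n \<Rightarrow> 'n \<Rightarrow> nat" where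
  "k1 a n j = (\<lambda>t. (if t = a then n else 0) + (if t = j then 1 else 0))"

definition k2 :: "'n \<Rightarrow> nat \<Rightarrow> 'n \<Rightarrow> 'n \<Rightarrow> 'n \<Rightarrow> nat" where
  "k2 a n i j = (\<lambda>t. (if t = a then n else 0) + (if t = i then 1 else 0) + (if t = j then 1 else 0))"

lemma sum_k1: "sum (k1 a n j) (UNIV::'n::finite set) = n + 1"
  unfolding k1_def by (simp add: sum.distrib)

lemma sum_k2: "sum (k2 a n i j) (UNIV::'n::finite set) = n + 2"
  unfolding k2_def by (simp add: sum.distrib)

lemma S2_collapse:
  fixes a j :: "'n::finite"
  assumes "q = Suc m"
  shows "(\<Sum>k\<in>KK q. (ww q k * real (k j)) * mon (dec j k) (axis a 1)) =
     ww q (k1 a m j) * real (k1 a m j j)"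
proof -
  have mem: "k1 a m j \<in> KK q" using sum_k1[of a m j] assms by (simp add: KK_def)
  have "(\<Sum>k\<in>KK q. (ww q k * real (k j)) * mon (dec j k) (axis a 1)) =
        (ww q (k1 a m j) * real (k1 a m j j)) * mon (dec j (k1 a m j)) (axis a 1)"
  proof (rule collapse[OF finite_KK mem])
    fix k :: "'n \<Rightarrow> nat" assume k: "k \<in> KK q" and nz: "ww q k * real (k j) * mon (dec j k) (axis a 1) \<noteq> 0"
    then have kj: "k j \<noteq> 0" and z: "\<And>t. t \<noteq> a \<Longrightarrow> dec j k t = 0"
      by (auto simp: mon_axis split: if_splits)
    show "k = k1 a m j"
    proof (rule eq_from_sum[of a])
      fix t :: 'n assume "t \<noteq> a"
      then show "k t = k1 a m j t" using z[of t] kj by (auto simp: dec_def k1_def split: if_splits)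
    next
      show "sum k UNIV = sum (k1 a m j) UNIV" using k sum_k1[of a m j] assms by (simp add: KK_def)
    qed
  qed
  moreover have "mon (dec j (k1 a m j)) (axis a 1) = 1"
    by (simp add: mon_axis dec_def k1_def)
  ultimately show ?thesis by simp
qed

lemma S1_collapse:
  fixes a i j :: "'n::finite"
  assumes "q = Suc m"
  shows "(\<Sum>k\<in>KK (Suc q). (ww (Suc q) k * real (k i) * real (dec i k j)) * mon (dec j (dec i k)) (axis a 1)) =
     ww (Suc q) (k2 a m i j) * real (k2 a m i j i) * real (dec i (k2 a m i j) j)"
proof -
  have mem: "k2 a m i j \<in> KK (Suc q)" using sum_k2[of a m i j] assms by (simp add: KK_def)
  have "(\<Sum>k\<in>KK (Suc q). (ww (Suc q) k * real (k i) * real (dec i k j)) * mon (dec j (dec i k)) (axis a 1)) =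
        (ww (Suc q) (k2 a m i j) * real (k2 a m i j i) * real (dec i (k2 a m i j) j)) * mon (dec j (dec i (k2 a m i j))) (axis a 1)"
  proof (rule collapse[OF finite_KK mem])
    fix k :: "'n \<Rightarrow> nat" assume k: "k \<in> KK (Suc q)"
      and nz: "ww (Suc q) k * real (k i) * real (dec i k j) * mon (dec j (dec i k)) (axis a 1) \<noteq> 0"
    then have ki: "k i \<noteq> 0" and kj: "dec i k j \<noteq> 0" and z: "\<And>t. t \<noteq> a \<Longrightarrow> dec j (dec i k) t = 0"
      by (auto simp: mon_axis split: if_splits)
    show "k = k2 a m i j"
    proof (rule eq_from_sum[of a])
      fix t :: 'n assume "t \<noteq> a"
      then show "k t = k2 a m i j t" using z[of t] ki kj by (auto simp: dec_def k2_def split: if_splits)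
    next
      show "sum k UNIV = sum (k2 a m i j) UNIV" using k sum_k2[of a m i j] assms by (simp add: KK_def)
    qed
  qed
  moreover have "mon (dec j (dec i (k2 a m i j))) (axis a 1) = 1"
    by (simp add: mon_axis dec_def k2_def)
  ultimately show ?thesis by simp
qed

lemma jac_at:
  fixes a i j :: "'n::finite"
  assumes "q = Suc m"
  shows "jacobian (Fmap q) (axis a 1) $ i $ j =
     ww (Suc q) (k2 a m i j) * real (k2 a m i j i) * real (dec i (k2 a m i j) j)
     - cq q * (ww q (k1 a m j) * real (k1 a m j j))"
  unfolding jac_formula S1_collapse[OF assms] S2_collapse[OF assms] ..

lemma pf_k1_ne: "j \<noteq> a \<Longrightarrow> (\<Prod>t\<in>UNIV. fact (k1 (a::'n::finite) m j t)) = (fact m :: real)"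
  by (subst prod_supp[where A="{a,j}"]) (auto simp: k1_def)

lemma pf_k1_eq: "(\<Prod>t\<in>UNIV. fact (k1 (a::'n::finite) m a t)) = (fact (Suc m) :: real)"
  by (subst prod_supp[where A="{a}"]) (auto simp: k1_def)

lemma pf_k2_A: "i \<noteq> a \<Longrightarrow> j \<noteq> a \<Longrightarrow> i \<noteq> j \<Longrightarrow> (\<Prod>t\<in>UNIV. fact (k2 (a::'n::finite) m i j t)) = (fact m :: real)"
  by (subst prod_supp[where A="{a,i,j}"]) (auto simp: k2_def)

lemma pf_k2_B: "i \<noteq> a \<Longrightarrow> (\<Prod>t\<in>UNIV. fact (k2 (a::'n::finite) m i a t)) = (fact (Suc m) :: real)"
  by (subst prod_supp[where A="{a,i}"]) (auto simp: k2_def)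

lemma pf_k2_C: "i \<noteq> a \<Longrightarrow> (\<Prod>t\<in>UNIV. fact (k2 (a::'n::finite) m i i t)) = (2 * fact m :: real)"
  by (subst prod_supp[where A="{a,i}"]) (auto simp: k2_def)

lemma pf_k2_D: "(\<Prod>t\<in>UNIV. fact (k2 (a::'n::finite) m a a t)) = (fact (Suc (Suc m)) :: real)"
  by (subst prod_supp[where A="{a}"]) (auto simp: k2_def)

lemma r1: "fact (Suc m) / fact m = (real m + 1)"
  by (simp add: fact_Suc del: of_nat_Suc)
lemma r2: "fact (Suc (Suc m)) / fact m = (real m + 2) * (real m + 1)"
  by (simp add: fact_Suc field_simps del: of_nat_Suc) (simp add: algebra_simps)
lemma r3: "fact (Suc (Suc m)) / fact (Suc m) = (real m + 2)"
  using r1[of "Suc m"] by simp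
lemma r4: "fact (Suc (Suc m)) / (2 * fact m) = (real m + 2) * (real m + 1) / 2"
  using r2[of m] by (simp add: field_simps)

lemma jac_A:
  fixes a i j :: "'n::finite"
  assumes "q = Suc m" "i \<noteq> a" "j \<noteq> a" "i \<noteq> j"
  shows "jacobian (Fmap q) (axis a 1) $ i $ j = 0"
  unfolding jac_at[OF assms(1)] ww_def multinom_def pf_k2_A[OF assms(2-4)] pf_k1_ne[OF assms(3)]
  using assms by (simp add: k1_def k2_def dec_def cq_def r1 r2 r3 r4 del: fact_Suc) (simp add: algebra_simps power2_eq_square)

lemma jac_B:
  fixes a i :: "'n::finite"
  assumes "q = Suc m" "i \<noteq> a"
  shows "jacobian (Fmap q) (axis a 1) $ i $ a = 0"
  unfolding jac_at[OF assms(1)] ww_def multinom_def pf_k2_B[OF assms(2)] pf_k1_eq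
  using assms by (simp add: k1_def k2_def dec_def cq_def r1 r2 r3 r4 del: fact_Suc)

lemma jac_C:
  fixes a i :: "'n::finite"
  assumes "q = Suc m" "i \<noteq> a"
  shows "jacobian (Fmap q) (axis a 1) $ i $ i \<noteq> 0"
  unfolding jac_at[OF assms(1)] ww_def multinom_def pf_k2_C[OF assms(2)] pf_k1_ne[OF assms(2)]
  using assms by (simp add: k1_def k2_def dec_def cq_def r1 r2 r3 r4 del: fact_Suc) (simp add: algebra_simps power2_eq_square, smt (verit) of_nat_0_le_iff mult_nonneg_nonneg)

lemma jac_D:
  fixes a :: "'n::finite"
  assumes "q = Suc m"
  shows "jacobian (Fmap q) (axis a 1) $ a $ a \<noteq> 0"
  unfolding jac_at[OF assms(1)] ww_def multinom_def pf_k2_D pf_k1_eq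
  using assms by (simp add: k1_def k2_def dec_def cq_def r1 r2 r3 r4 del: fact_Suc) (simp add: algebra_simps power2_eq_square, smt (verit) of_nat_0_le_iff mult_nonneg_nonneg)

lemma det_special:
  fixes M :: "real^'n::finite^'n"
  assumes z: "\<And>i j. i \<noteq> a \<Longrightarrow> i \<noteq> j \<Longrightarrow> M $ i $ j = 0"
  shows "det M = (\<Prod>i\<in>UNIV. M $ i $ i)"
proof -
  define F where "F p = of_int (sign p) * (\<Prod>i\<in>UNIV. M $ i $ p i)" for p :: "'n \<Rightarrow> 'n"
  have "det M = sum F {p. p permutes UNIV}"
    by (simp add: det_def F_def)
  also have "\<dots> = F id"
  proof (rule collapse)
    show "finite {p. p permutes (UNIV::'n set)}" by (simp add: finite_permutations)
    show "id \<in> {p. p permutes (UNIV::'n set)}" by (simp add: permutes_id)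
    fix p assume p: "p \<in> {p. p permutes (UNIV::'n set)}"
      and nz: "F p \<noteq> 0"
    have fix_i: "p i = i" if "i \<noteq> a" for i
    proof (rule ccontr)
      assume "p i \<noteq> i"
      then have "M $ i $ p i = 0" using z that by auto
      then have "(\<Prod>i\<in>UNIV. M $ i $ p i) = 0" by (intro prod_zero) auto
      then show False using nz by (simp add: F_def)
    qed
    have "p a = a"
    proof (rule ccontr)
      assume "p a \<noteq> a"
      then have "p (p a) = p a" using fix_i by auto
      moreover have "inj p" using p permutes_inj by auto
      ultimately have "p a = a" by (meson injD)
      with \<open>p a \<noteq> a\<close> show False by simp
    qed
    then show "p = id" using fix_i by (metis eq_id_iff)
  qed
  also have "\<dots> = (\<Prod>i\<in>UNIV. M $ i $ i)" by (simp add: F_def)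
  finally show ?thesis .
qed

lemma det_nz:
  fixes a :: "'n::finite"
  assumes "q \<ge> 1"
  shows "det (jacobian (Fmap q) (axis a 1)) \<noteq> 0"
proof -
  obtain m where q: "q = Suc m" using assms by (cases q) auto
  have "det (jacobian (Fmap q) (axis a 1)) = (\<Prod>i\<in>UNIV. jacobian (Fmap q) (axis a 1) $ i $ i)"
  proof (rule det_special[of a])
    fix i j :: 'n assume "i \<noteq> a" "i \<noteq> j"
    then show "jacobian (Fmap q) (axis a 1) $ i $ j = 0"
      using jac_A[OF q] jac_B[OF q] by (cases "j = a") auto
  qed
  also have "\<dots> \<noteq> 0"
  proof -
    have "jacobian (Fmap q) (axis a 1) $ i $ i \<noteq> 0" for i
      using jac_C[OF q, of i a] jac_D[OF q, of a] by (cases "i = a") auto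
    then show ?thesis by simp
  qed
  finally show ?thesis .
qed

lemma part1:
  fixes q :: nat
  assumes "q \<ge> 1"
  shows "\<exists>(c::('m::finite \<Rightarrow> nat) \<Rightarrow> real) (N::nat).
            (\<forall>\<xi>::real^'m. det (jacobian (Fmap q) \<xi>) =
               (\<Sum>k\<in>{k::'m\<Rightarrow>nat. \<forall>i. k i \<le> N}. c k * (\<Prod>i\<in>UNIV. (\<xi> $ i) ^ k i)))
            \<and> (\<exists>k. (\<forall>i. k i \<le> N) \<and> c k \<noteq> 0)"
proof -
  obtain c N where cN: "\<forall>x::real^'m. det (jacobian (Fmap q) x) = (\<Sum>k\<in>bx N. c k * mon k x)"
    using is_poly_det[of q] unfolding is_poly_def by blast
  have "\<exists>k. (\<forall>i. k i \<le> N) \<and> c k \<noteq> 0"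
  proof (rule ccontr)
    assume "\<not> ?thesis"
    then have "\<forall>k\<in>bx N. c k = 0" by (auto simp: bx_def)
    then have "det (jacobian (Fmap q) (axis (undefined::'m) 1)) = 0" using cN by simp
    then show False using det_nz[OF assms] by blast
  qed
  then show ?thesis using cN unfolding bx_def mon_def by blast
qed

lemma F_deriv:
  fixes q :: nat
  shows "\<exists>D. \<forall>x::real^'m::finite. ((\<lambda>y. Fmap q y $ i) has_derivative D x) (at x) \<and>
             (\<forall>j. D x (axis j 1) = jacobian (Fmap q) x $ i $ j)"
proof -
  have "Dk (Suc 0) UNIV (\<lambda>y::real^'m. Fmap q y $ i)" by (rule is_poly_Dk[OF is_poly_Fmap])
  then obtain D where d: "\<forall>x. ((\<lambda>y::real^'m. Fmap q y $ i) has_derivative D x) (at x)" by auto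
  have "D x (axis j 1) = jacobian (Fmap q) x $ i $ j" for x j
    unfolding jacobian_def using pdiff_eq[OF d[rule_format, of x], of j] by simp
  then show ?thesis using d by blast
qed

lemma lin_expand:
  assumes "bounded_linear (L::real^'n::finite \<Rightarrow> real)"
  shows "L v = (\<Sum>j\<in>UNIV. L (axis j 1) * v $ j)"
proof -
  have "L v = L (\<Sum>j\<in>UNIV. (v $ j) *\<^sub>R axis j 1)" using basis_exp_R[of v] by simp
  also have "\<dots> = (\<Sum>j\<in>UNIV. v $ j * L (axis j 1))"
    using assms by (simp add: linear_sum linear_scale bounded_linear.linear)
  finally show ?thesis by (simp add: mult.commute)
qed

lemma F_has_deriv:
  fixes q :: nat
  shows "(Fmap q has_derivative (\<lambda>v. jacobian (Fmap q) x *v v)) (at (x::real^'m::finite))"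
proof -
  have "\<exists>D. \<forall>i x. ((\<lambda>y::real^'m. Fmap q y $ i) has_derivative D i x) (at x) \<and>
             (\<forall>j. D i x (axis j 1) = jacobian (Fmap q) x $ i $ j)"
  proof -
    have "\<forall>i. \<exists>D. \<forall>x::real^'m. ((\<lambda>y. Fmap q y $ i) has_derivative D x) (at x) \<and>
             (\<forall>j. D x (axis j 1) = jacobian (Fmap q) x $ i $ j)"
      using F_deriv by blast
    then show ?thesis by (rule choice)
  qed
  then obtain D where d: "\<And>i x. ((\<lambda>y::real^'m. Fmap q y $ i) has_derivative D i x) (at x)"
    and dj: "\<And>i x j. D i x (axis j 1) = jacobian (Fmap q) x $ i $ j" by blast
  have "(Fmap q has_derivative (\<lambda>v. \<chi> i. D i x v)) (at x)"
    by (rule has_derivative_vec_comp) (rule d)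
  moreover have "(\<lambda>v. \<chi> i. D i x v) = (\<lambda>v. jacobian (Fmap q) x *v v)"
  proof (rule ext)
    fix v
    have "D i x v = (\<Sum>j\<in>UNIV. jacobian (Fmap q) x $ i $ j * v $ j)" for i
      using lin_expand[OF has_derivative_bounded_linear[OF d[of i x]], of v] dj by simp
    then show "(\<chi> i. D i x v) = jacobian (Fmap q) x *v v"
      by (simp add: matrix_vector_mult_def)
  qed
  ultimately show ?thesis by simp
qed

lemma cont_jac: "continuous_on S (\<lambda>x. jacobian (Fmap q) x $ i $ j)"
  using Dk_cont[OF is_poly_Dk[OF is_poly_jac, of 0]] by blast

lemma is_poly_if: "is_poly f \<Longrightarrow> is_poly g \<Longrightarrow> is_poly (\<lambda>x. if P then f x else g x)"
  by (cases P) auto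

lemma is_poly_det_repl: "is_poly (\<lambda>y. det (\<chi> r c. if c = i then b $ r else jacobian (Fmap q) y $ r $ c))"
  unfolding det_def
  unfolding vec_lambda_beta
  by (intro is_poly_sum is_poly_mult is_poly_const is_poly_prod finite_permutations is_poly_if is_poly_jac) auto

lemma part2:
  fixes q :: nat
  shows "\<forall>\<xi>::real^'m::finite. det (jacobian (Fmap q) \<xi>) \<noteq> 0 \<longrightarrow> local_diffeo_at (Fmap q) \<xi>"
proof (intro allI impI)
  fix x0 :: "real^'m" assume x0: "det (jacobian (Fmap q) x0) \<noteq> 0"
  define J :: "real^'m \<Rightarrow> real^'m^'m" where "J = jacobian (Fmap q)"
  define W :: "(real^'m) set" where "W = {x. det (J x) \<noteq> 0}"
  have detc: "continuous_on UNIV (\<lambda>x. det (J x))"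
    unfolding J_def using Dk_cont[OF is_poly_Dk[OF is_poly_det, of 0]] by blast
  have oW: "open W" unfolding W_def by (rule open_Collect_neq[OF detc continuous_on_const])
  have x0W: "x0 \<in> W" using x0 by (simp add: W_def J_def)
  define f' where "f' x = Blinfun (\<lambda>v. J x *v v)" for x
  have f'a: "blinfun_apply (f' x) = (\<lambda>v. J x *v v)" for x
    unfolding f'_def by (rule bounded_linear_Blinfun_apply) simp
  have derf: "(Fmap q has_derivative blinfun_apply (f' x)) (at x)" for x
    unfolding f'a J_def by (rule F_has_deriv)
  have contf: "continuous_on W f'"
  proof (rule continuous_on_blinfun_componentwise)
    fix b :: "real^'m"
    show "continuous_on W (\<lambda>x. blinfun_apply (f' x) b)"
      unfolding f'a matrix_vector_mult_def J_def
      by (intro continuous_on_vec_lambda continuous_on_sum continuous_on_mult cont_jac continuous_on_const)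
  qed
  obtain B where B: "B ** J x0 = mat 1"
    using x0 unfolding invertible_det_nz[symmetric] invertible_def J_def by blast
  define invf where "invf = Blinfun (\<lambda>v. B *v v)"
  have invf: "invf o\<^sub>L f' x0 = id_blinfun"
  proof (rule blinfun_eqI)
    fix v
    have "blinfun_apply invf = (\<lambda>v. B *v v)" unfolding invf_def by (rule bounded_linear_Blinfun_apply) simp
    then show "blinfun_apply (invf o\<^sub>L f' x0) v = blinfun_apply id_blinfun v"
      by (simp add: f'a matrix_vector_mul_assoc B)
  qed
  obtain U V g g' where oU: "open U" and UW: "U \<subseteq> W" and x0U: "x0 \<in> U" and oV: "open V"
    and hom: "homeomorphism U V (Fmap q) g"
    and dg: "\<And>y. y \<in> V \<Longrightarrow> (g has_derivative (g' y)) (at y)"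
    and g': "\<And>y. y \<in> V \<Longrightarrow> g' y = inv (blinfun_apply (f'(g y)))"
    and bij: "\<And>y. y \<in> V \<Longrightarrow> bij (blinfun_apply (f'(g y)))"
    using inverse_function_theorem[OF oW derf contf x0W invf] by metis
  from hom have contg: "continuous_on V g" and FU: "Fmap q ` U = V" and gV: "g ` V = U"
    and gF: "\<And>x. x \<in> U \<Longrightarrow> g (Fmap q x) = x" and Fg: "\<And>y. y \<in> V \<Longrightarrow> Fmap q (g y) = y"
    unfolding homeomorphism_def by auto
  define \<psi> where "\<psi> i j y = det (\<chi> r c. if c = i then axis j 1 $ r else J y $ r $ c) / det (J y)" for i j y
  have smooth_\<psi>: "smooth W (\<psi> i j)" for i j
  proof -
    have "Dk k W (\<lambda>y. det (\<chi> r c. if c = i then axis j 1 $ r else J y $ r $ c) * inverse (det (J y)))" for k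
      unfolding J_def
      by (intro Dk_mult Dk_inverse is_poly_Dk[OF is_poly_det_repl] is_poly_Dk[OF is_poly_det])
         (auto simp: W_def J_def)
    then show ?thesis unfolding smooth_def \<psi>_def by (simp add: divide_inverse)
  qed
  have pg: "g' z (axis j 1) $ i = \<psi> i j (g z)" if z: "z \<in> V" for z i j
  proof -
    let ?L = "blinfun_apply (f' (g z))"
    have "?L (g' z (axis j 1)) = axis j 1"
      using g'[OF z] surj_f_inv_f[OF bij_is_surj[OF bij[OF z]]] by simp
    then have eq: "J (g z) *v g' z (axis j 1) = axis j 1" by (simp add: f'a)
    have "g z \<in> W" using gV z UW by blast
    then have "det (J (g z)) \<noteq> 0" by (simp add: W_def)
    from cramer[OF this] eq have "g' z (axis j 1) = (\<chi> k. det (\<chi> r c. if c = k then axis j 1 $ r else J (g z) $ r $ c) / det (J (g z)))"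
      by blast
    then show ?thesis by (simp add: \<psi>_def)
  qed
  have gk: "\<forall>i. Dk k V (\<lambda>z. g z $ i)" for k
  proof (induction k)
    case 0 then show ?case using contg by (auto intro: continuous_on_component)
  next
    case (Suc k)
    show ?case
    proof
      fix i
      have cont: "continuous_on V (\<lambda>z. g z $ i)" using contg by (auto intro: continuous_on_component)
      have der: "\<forall>z\<in>V. ((\<lambda>z. g z $ i) has_derivative (\<lambda>v. g' z v $ i)) (at z)"
        using dg bounded_linear.has_derivative[OF bounded_linear_vec_nth[of i]] by blast
      have "Dk k V (\<lambda>z. g' z (axis j 1) $ i)" for j
      proof -
        have "Dk k V (\<lambda>z. \<psi> i j (g z))"
          by (rule Dk_comp[OF oV smooth_\<psi> oW]) (use gV UW Suc.IH in auto)
        then show ?thesis using Dk_cong[OF oV] pg by (metis (no_types, lifting))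
      qed
      then show "Dk (Suc k) V (\<lambda>z. g z $ i)" using cont der unfolding Dk.simps
        by (intro conjI exI[of _ "\<lambda>z v. g' z v $ i"]) auto
    qed
  qed
  show "local_diffeo_at (Fmap q) x0"
    unfolding local_diffeo_at_def
  proof (intro exI conjI)
    show "open U" "x0 \<in> U" "open V" "Fmap q ` U = V" by fact+
    show "\<forall>y\<in>U. g (Fmap q y) = y" using gF by blast
    show "\<forall>z\<in>V. Fmap q (g z) = z" using Fg by blast
    show "smooth_map_on U (Fmap q)" unfolding smooth_map_on_def
      by (intro allI Dk_Ck is_poly_Dk[OF is_poly_Fmap])
    show "smooth_map_on V g" unfolding smooth_map_on_def
      using gk Dk_Ck by blast
  qed
qed

theorem mainTheorem8:
  fixes q :: nat
  assumes "q \<ge> 1"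
  shows "(\<exists>(c::('m::finite \<Rightarrow> nat) \<Rightarrow> real) (N::nat).
            (\<forall>\<xi>::real^'m. det (jacobian (Fmap q) \<xi>) =
               (\<Sum>k\<in>{k::'m\<Rightarrow>nat. \<forall>i. k i \<le> N}. c k * (\<Prod>i\<in>UNIV. (\<xi> $ i) ^ k i)))
            \<and> (\<exists>k. (\<forall>i. k i \<le> N) \<and> c k \<noteq> 0))
         \<and> (\<forall>\<xi>::real^'m. det (jacobian (Fmap q) \<xi>) \<noteq> 0 \<longrightarrow> local_diffeo_at (Fmap q) \<xi>)"
  using part1[OF assms] part2[of q] by blast

end
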